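(* Consider the hierarchical imitation learning setting and the algorithm hg-DAgger (hierarchically guided DAgger) with halving learners described in the context. Suppose the meta-controller class $\mathcal{M}$ and the subpolicy class $\Pi_{\mathrm{LO}}$ are finite and the expert is realizable: $\mu^\star\in\mathcal{M}$ and $\pi^\star_g\in\Pi_{\mathrm{LO}}$ for every $g\in\mathcal{G}$. Then the total cost incurred by the expert in hg-DAgger by round $T$ is at most $$T\,C^{I}_{\mathrm{FULL}} + \bigl(\log_2|\mathcal{M}| + |\mathcal{G}^\star|\log_2|\Pi_{\mathrm{LO}}|\bigr)\bigl(C^{L}_{\mathrm{HI}} + H_{\mathrm{HI}}\,C^{I}_{\mathrm{LO}}\bigr) + \bigl(|\mathcal{G}^\star|\log_2|\Pi_{\mathrm{LO}}|\bigr)\,C^{L}_{\mathrm{LO}},$$ where $\mathcal{G}^\star:=\mu^\star(\mathcal{S})\subseteq\mathcal{G}$ is the set of subgoals actually used by the expert.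
   Context: Setting. There is a state space $\mathcal{S}$, an action space $\mathcal{A}$ and a set of subgoals $\mathcal{G}$. A hierarchical policy consists of a meta-controller $\mu:\mathcal{S}\to\mathcal{G}$ and, for each $g\in\mathcal{G}$, a subpolicy $\pi_g$ which maps a state to an action together with a termination signal $\omega\in\{0,1\}$ (termination is treated as part of an augmented low-level action). An episode starts at a start state $s$; repeatedly, the meta-controller chooses $g=\mu(s)$, then $\pi_g$ is rolled out from $s$ until it signals termination, producing a low-level trajectory $\tau$ of state–action(–termination) pairs, and $s$ is set to the last state of $\tau$; an episode consists of at most $H_{\mathrm{HI}}$ such high-level steps. The high-level trajectory is $\tau_{\mathrm{HI}}=\{(s_h,g_h)\}_h$ and the full trajectory $\tau_{\mathrm{FULL}}$ is the concatenation of the low-level trajectories. The expert has a hierarchical policy $(\mu^\star,\{\pi^\star_g\}_{g\in\mathcal{G}})$. Expert operations and costs (each invocation costs the stated amount): $\mathrm{Inspect}_{\mathrm{FULL}}(\tau_{\mathrm{FULL}})$ returns Pass/Fail according to whether the overall task was accomplished, cost $C^{I}_{\mathrm{FULL}}$; $\mathrm{Label}_{\mathrm{HI}}(\tau_{\mathrm{HI}})$ returns the expert's subgoal $g^\star_h=\mu^\star(s_h)$ for every high-level state $s_h$, cost $C^{L}_{\mathrm{HI}}$; $\mathrm{Inspect}_{\mathrm{LO}}(\tau;g)$ returns Pass/Fail according to whether the low-level trajectory $\tau$ accomplished subgoal $g$, cost $C^{I}_{\mathrm{LO}}$; $\mathrm{Label}_{\mathrm{LO}}(\tau;g)$ returns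 the expert's labels $\pi^\star_g(s)$ for all states $s$ in $\tau$, cost $C^{L}_{\mathrm{LO}}$. The expert is consistent: a subpolicy execution that agrees with $\pi^\star_g$ on every visited state passes $\mathrm{Inspect}_{\mathrm{LO}}(\cdot;g)$, and an episode in which every high-level choice agrees with $\mu^\star$ and every low-level execution agrees with the corresponding $\pi^\star_g$ passes $\mathrm{Inspect}_{\mathrm{FULL}}$. Learners. $\mathcal{M}$ is a finite class of meta-controllers and $\Pi_{\mathrm{LO}}$ a finite class of subpolicies. The meta-controller and each subpolicy $\pi_g$ are learned by the halving algorithm: it maintains a version space (initially $\mathcal{M}$, resp. $\Pi_{\mathrm{LO}}$), predicts by majority vote of the version space, and upon receiving labeled data removes all policies inconsistent with the labels. hg-DAgger (interactive rounds, no behavioral-cloning warm start). In each round $t=1,\dots,T$: obtain a new environment instance with a start state; execute the current hierarchical policy, recording $(s_h,g_h,\tau_h)$ for each high-level step; call $\mathrm{Inspect}_{\mathrm{FULL}}$ on the full trajectory. If it returns Fail: call $\mathrm{Label}_{\mathrm{HI}}(\tau_{\mathrm{HI}})$ to obtain $g^\star_h$; then process $h=1,2,\dots$ in order as long as $g_h=g^\star_h$: call $\mathrm{Inspect}_{\mathrm{LO}}(\tau_h;g_h)$, and if it returns Fail, call $\mathrm{Label}_{\mathrm{LO}}(\tau_h;g_h)$, add these labels to the data of subgoal $g_h$ and stop processing; finally add the high-level labels $\{(s_h,g^\star_h)\}$ to the meta-controller data. At the end of the round, update all halving learners on their data. The total expert cost is the sum of costs of all operations invoked.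
   Formalization: Expert consistency for $\mathrm{Inspect}_{\mathrm{FULL}}$ is strengthened: an episode passes whenever every $g_h$ equals $\mu^\star(s_h)$ and every $\tau_h$ passes $\mathrm{Inspect}_{\mathrm{LO}}(\tau_h;g_h)$, not only when all low-level executions agree with $\pi^\star_g$. The statement above fails without it. *)

theory Defs
  imports Complex_Main
begin

text \<open>States 's, (low-level) actions 'a, subgoals 'g. A subpolicy maps a state to an
  augmented action (action, termination signal). A low-level trajectory is a list of
  (state, (action, termination)) entries; a high-level step is (s_h, g_h, tau_h).\<close>

type_synonym ('s,'a) lotraj = "('s \<times> ('a \<times> bool)) list"
type_synonym ('s,'g,'a) hstep = "'s \<times> 'g \<times> ('s,'a) lotraj"

definition is_maj :: "('x \<Rightarrow> 'y) set \<Rightarrow> 'x \<Rightarrow> 'y \<Rightarrow> bool" where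
  "is_maj V x y \<longleftrightarrow> (\<forall>y'. card {f\<in>V. f x = y'} \<le> card {f\<in>V. f x = y})"

definition lo_wf :: "('s,'a) lotraj \<Rightarrow> bool" where
  "lo_wf \<tau> \<longleftrightarrow> \<tau> \<noteq> [] \<and> snd (snd (last \<tau>)) \<and>
     (\<forall>i < length \<tau> - 1. \<not> snd (snd (\<tau> ! i)))"

definition hi_wf :: "nat \<Rightarrow> ('s,'g,'a) hstep list \<Rightarrow> bool" where
  "hi_wf H ep \<longleftrightarrow> length ep \<le> H \<and>
     (\<forall>i < length ep. lo_wf (snd (snd (ep ! i))) \<and> fst (hd (snd (snd (ep ! i)))) = fst (ep ! i)) \<and>
     (\<forall>i. Suc i < length ep \<longrightarrow> fst (ep ! Suc i) = fst (last (snd (snd (ep ! i)))))"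

definition full_traj :: "('s,'g,'a) hstep list \<Rightarrow> ('s,'a) lotraj" where
  "full_traj ep = concat (map (\<lambda>(s,g,\<tau>). \<tau>) ep)"

text \<open>The episode was produced by the current hierarchical policy: the meta-controller
  and each subpolicy predict by majority vote of their version spaces.\<close>
definition follows :: "('s \<Rightarrow> 'g) set \<Rightarrow> ('g \<Rightarrow> ('s \<Rightarrow> 'a \<times> bool) set)
    \<Rightarrow> ('s,'g,'a) hstep list \<Rightarrow> bool" where
  "follows VM VL ep \<longleftrightarrow>
     (\<forall>(s,g,\<tau>)\<in>set ep. is_maj VM s g \<and> (\<forall>(s',b)\<in>set \<tau>. is_maj (VL g) s' b))"

text \<open>Returns (number of Inspect_LO calls, the labelled (tau, g) if any).\<close>
fun lo_process :: "('s \<Rightarrow> 'g) \<Rightarrow> (('s,'a) lotraj \<Rightarrow> 'g \<Rightarrow> bool) \<Rightarrow> ('s,'g,'a) hstep list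
    \<Rightarrow> nat \<times> (('s,'a) lotraj \<times> 'g) option" where
  "lo_process mu inspL [] = (0, None)"
| "lo_process mu inspL ((s,g,\<tau>) # rest) =
     (if g \<noteq> mu s then (0, None)
      else if inspL \<tau> g then (let r = lo_process mu inspL rest in (Suc (fst r), snd r))
      else (1, Some (\<tau>, g)))"

text \<open>Version spaces of the halving learners at the start of round t (rounds 0,1,...),
  given the episodes ep 0, ep 1, ... executed in the rounds.\<close>
primrec vspaces :: "('s \<Rightarrow> 'g) set \<Rightarrow> ('s \<Rightarrow> 'a \<times> bool) set \<Rightarrow> ('s \<Rightarrow> 'g) \<Rightarrow> ('g \<Rightarrow> 's \<Rightarrow> 'a \<times> bool)
    \<Rightarrow> (('s,'a) lotraj \<Rightarrow> bool) \<Rightarrow> (('s,'a) lotraj \<Rightarrow> 'g \<Rightarrow> bool)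
    \<Rightarrow> (nat \<Rightarrow> ('s,'g,'a) hstep list) \<Rightarrow> nat
    \<Rightarrow> ('s \<Rightarrow> 'g) set \<times> ('g \<Rightarrow> ('s \<Rightarrow> 'a \<times> bool) set)" where
  "vspaces M PiLO mu pist inspF inspL ep 0 = (M, \<lambda>g. PiLO)"
| "vspaces M PiLO mu pist inspF inspL ep (Suc t) =
     (let VM = fst (vspaces M PiLO mu pist inspF inspL ep t);
          VL = snd (vspaces M PiLO mu pist inspF inspL ep t);
          e = ep t
      in if inspF (full_traj e) then (VM, VL)
         else ({f \<in> VM. \<forall>(s,g,\<tau>)\<in>set e. f s = mu s},
               (case snd (lo_process mu inspL e) of
                  None \<Rightarrow> VL
                | Some (\<tau>, g) \<Rightarrow> VL(g := {p \<in> VL g. \<forall>(s,b)\<in>set \<tau>. p s = pist g s}))))"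

definition round_cost :: "real \<Rightarrow> real \<Rightarrow> real \<Rightarrow> real \<Rightarrow> ('s \<Rightarrow> 'g)
    \<Rightarrow> (('s,'a) lotraj \<Rightarrow> bool) \<Rightarrow> (('s,'a) lotraj \<Rightarrow> 'g \<Rightarrow> bool)
    \<Rightarrow> ('s,'g,'a) hstep list \<Rightarrow> real" where
  "round_cost CIF CLH CII CLL mu inspF inspL e =
     CIF + (if inspF (full_traj e) then 0
            else CLH + real (fst (lo_process mu inspL e)) * CII
                 + (if snd (lo_process mu inspL e) = None then 0 else CLL))"

end

theory Submission
  imports Defs
begin

lemma halving:
  assumes "finite V" "hh \<in> V" "is_maj V x y" "hh x \<noteq> y" "W \<subseteq> {f\<in>V. f x = hh x}"
  shows "2 * card W \<le> card V"
proof -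
  have a: "card {f\<in>V. f x = hh x} \<le> card {f\<in>V. f x = y}"
    using assms(3) unfolding is_maj_def by blast
  have "card W \<le> card {f\<in>V. f x = hh x}"
    using assms(1,5) by (simp add: card_mono)
  moreover have "card {f\<in>V. f x = hh x} + card {f\<in>V. f x = y} = card ({f\<in>V. f x = hh x} \<union> {f\<in>V. f x = y})"
    using assms(1,4) by (subst card_Un_disjoint) auto
  moreover have "card ({f\<in>V. f x = hh x} \<union> {f\<in>V. f x = y}) \<le> card V"
    using assms(1) by (intro card_mono) auto
  ultimately show ?thesis using a by linarith
qed

lemma log_half:
  assumes "(a::nat) \<ge> 1" "2 * a \<le> b"
  shows "log 2 (real a) + 1 \<le> log 2 (real b)"
proof -
  have "log 2 (real a) + 1 = log 2 (2 * real a)"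
    using assms by (simp add: log_mult)
  also have "\<dots> \<le> log 2 (real b)"
    using assms by (subst log_le_cancel_iff) auto
  finally show ?thesis .
qed

lemma log_mono_card:
  assumes "(a::nat) \<ge> 1" "a \<le> b"
  shows "log 2 (real a) \<le> log 2 (real b)"
  using assms by (subst log_le_cancel_iff) auto

lemma lo_process_len: "fst (lo_process mu inspL e) \<le> length e"
  by (induction mu inspL e rule: lo_process.induct) (auto simp: Let_def)

lemma lo_process_some:
  "snd (lo_process mu inspL e) = Some (\<tau>, g) \<Longrightarrow>
     \<exists>s. (s, g, \<tau>) \<in> set e \<and> g = mu s \<and> \<not> inspL \<tau> g"
  by (induction mu inspL e rule: lo_process.induct) (auto simp: Let_def split: if_splits)

lemma lo_process_none:
  "(\<forall>(s,g,\<tau>)\<in>set e. g = mu s) \<Longrightarrow> (\<exists>(s,g,\<tau>)\<in>set e. \<not> inspL \<tau> g) \<Longrightarrow>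
     snd (lo_process mu inspL e) \<noteq> None"
  by (induction mu inspL e rule: lo_process.induct) (auto simp: Let_def split: if_splits)

theorem theorem1:
  fixes M :: "('s \<Rightarrow> 'g) set" and PiLO :: "('s \<Rightarrow> 'a \<times> bool) set"
    and mu_star :: "'s \<Rightarrow> 'g" and pi_star :: "'g \<Rightarrow> 's \<Rightarrow> 'a \<times> bool"
    and inspF :: "('s,'a) lotraj \<Rightarrow> bool" and inspL :: "('s,'a) lotraj \<Rightarrow> 'g \<Rightarrow> bool"
    and H T :: nat and CIF CLH CII CLL :: real
    and ep :: "nat \<Rightarrow> ('s,'g,'a) hstep list"
  assumes finM: "finite M" and finPi: "finite PiLO"
    and real_M: "mu_star \<in> M" and real_Pi: "\<forall>g. pi_star g \<in> PiLO"
    and finGstar: "finite (range mu_star)"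
    and cons_LO: "\<And>\<tau> g. lo_wf \<tau> \<Longrightarrow> (\<forall>(s,b)\<in>set \<tau>. pi_star g s = b) \<Longrightarrow> inspL \<tau> g"
    and cons_FULL: "\<And>e. hi_wf H e \<Longrightarrow> (\<forall>(s,g,\<tau>)\<in>set e. g = mu_star s \<and> inspL \<tau> g)
                        \<Longrightarrow> inspF (full_traj e)"
    and costs: "CIF \<ge> 0" "CLH \<ge> 0" "CII \<ge> 0" "CLL \<ge> 0"
    and run: "\<And>t. t < T \<Longrightarrow> hi_wf H (ep t) \<and>
               follows (fst (vspaces M PiLO mu_star pi_star inspF inspL ep t))
                       (snd (vspaces M PiLO mu_star pi_star inspF inspL ep t)) (ep t)"
  shows "(\<Sum>t<T. round_cost CIF CLH CII CLL mu_star inspF inspL (ep t))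
         \<le> real T * CIF
           + (log 2 (card M) + real (card (range mu_star)) * log 2 (card PiLO)) * (CLH + real H * CII)
           + (real (card (range mu_star)) * log 2 (card PiLO)) * CLL"
proof -
  define V where "V = vspaces M PiLO mu_star pi_star inspF inspL ep"
  define VM where "VM t = fst (V t)" for t
  define VL where "VL t = snd (V t)" for t
  define A where "A = CLH + real H * CII"
  define G where "G = range mu_star"
  have A0: "A \<ge> 0" using costs by (simp add: A_def)
  have stepM: "VM (Suc t) = (if inspF (full_traj (ep t)) then VM t
      else {f \<in> VM t. \<forall>(s,g,\<tau>)\<in>set (ep t). f s = mu_star s})" for t
    by (simp add: VM_def V_def Let_def)
  have stepL: "VL (Suc t) = (if inspF (full_traj (ep t)) then VL t
      else (case snd (lo_process mu_star inspL (ep t)) of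
                  None \<Rightarrow> VL t
                | Some (\<tau>, g) \<Rightarrow> (VL t)(g := {p \<in> VL t g. \<forall>(s,b)\<in>set \<tau>. p s = pi_star g s})))" for t
    unfolding VL_def V_def by (simp add: Let_def)
  have inv: "mu_star \<in> VM t \<and> VM t \<subseteq> M \<and> (\<forall>g. pi_star g \<in> VL t g \<and> VL t g \<subseteq> PiLO)" for t
  proof (induction t)
    case 0
    then show ?case using real_M real_Pi by (simp add: VM_def VL_def V_def)
  next
    case (Suc t)
    show ?case
    proof (cases "inspF (full_traj (ep t))")
      case True
      then show ?thesis using Suc by (simp add: stepM stepL)
    next
      case False
      show ?thesis
      proof (cases "snd (lo_process mu_star inspL (ep t))")
        case None
        then show ?thesis using Suc False by (auto simp: stepM stepL)
      next
        case (Some a)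
        then obtain \<tau> g where "a = (\<tau>, g)" by (cases a) auto
        then show ?thesis using Suc False Some by (auto simp: stepM stepL)
      qed
    qed
  qed
  have monoM: "VM (Suc t) \<subseteq> VM t" for t by (auto simp: stepM)
  have monoL: "VL (Suc t) g \<subseteq> VL t g" for t g
    by (auto simp: stepL split: option.splits)
  have finVM: "finite (VM t)" for t using inv[of t] finM finite_subset by blast
  have finVL: "finite (VL t g)" for t g using inv[of t] finPi finite_subset by blast
  have cardVM: "card (VM t) \<ge> 1" for t
    using inv[of t] finVM[of t] by (metis One_nat_def Suc_leI card_gt_0_iff empty_iff)
  have cardVL: "card (VL t g) \<ge> 1" for t g
    using inv[of t] finVL[of t g] by (metis One_nat_def Suc_leI card_gt_0_iff empty_iff)
  define PM where "PM t = log 2 (real (card (VM t)))" for t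
  define PL where "PL t = (\<Sum>g\<in>G. log 2 (real (card (VL t g))))" for t
  have dM0: "PM (Suc t) \<le> PM t" for t
    unfolding PM_def using cardVM[of "Suc t"] monoM[of t] finVM[of t]
    by (intro log_mono_card) (auto intro: card_mono)
  have dL0g: "log 2 (real (card (VL (Suc t) g))) \<le> log 2 (real (card (VL t g)))" for t g
    using cardVL[of "Suc t" g] monoL[of t g] finVL[of t g]
    by (intro log_mono_card) (auto intro: card_mono)
  have dLeq: "PL t - PL (Suc t) = (\<Sum>g\<in>G. log 2 (real (card (VL t g))) - log 2 (real (card (VL (Suc t) g))))" for t
    unfolding PL_def by (simp add: sum_subtractf)
  have dL0: "PL (Suc t) \<le> PL t" for t
    using dLeq[of t] dL0g[of t] by (smt (verit) sum_nonneg)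
  have PM_nn: "PM t \<ge> 0" for t unfolding PM_def using cardVM[of t] by simp
  have PL_nn: "PL t \<ge> 0" for t unfolding PL_def using cardVL[of t] by (intro sum_nonneg) (simp add: Suc_le_eq)
  have someL: "PL t - PL (Suc t) \<ge> 1"
    if tT: "t < T" and nF: "\<not> inspF (full_traj (ep t))"
      and sm: "snd (lo_process mu_star inspL (ep t)) = Some (\<tau>, g)" for t \<tau> g
  proof -
    obtain s where sg: "(s, g, \<tau>) \<in> set (ep t)" "g = mu_star s" "\<not> inspL \<tau> g"
      using lo_process_some[OF sm] by blast
    have wf: "hi_wf H (ep t)" and fo: "follows (VM t) (VL t) (ep t)"
      using run[OF tT] by (auto simp: VM_def VL_def V_def)
    have lwf: "lo_wf \<tau>"
      using wf sg(1) unfolding hi_wf_def by (metis in_set_conv_nth snd_conv)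
    obtain s' b where sb: "(s', b) \<in> set \<tau>" "pi_star g s' \<noteq> b"
      using cons_LO[OF lwf, of g] sg(3) by (force simp: case_prod_beta)
    have mj: "is_maj (VL t g) s' b" using fo sg(1) sb(1) unfolding follows_def by fastforce
    have eq: "VL (Suc t) g = {p \<in> VL t g. \<forall>(s,b)\<in>set \<tau>. p s = pi_star g s}"
      using nF sm by (simp add: stepL)
    have "2 * card (VL (Suc t) g) \<le> card (VL t g)"
      apply (rule halving[where hh="pi_star g", OF finVL[of t g] _ mj sb(2)])
      using inv[of t] eq sb(1) by auto
    then have g1: "log 2 (real (card (VL (Suc t) g))) + 1 \<le> log 2 (real (card (VL t g)))"
      using cardVL by (intro log_half) auto
    have gG: "g \<in> G" using sg(2) by (simp add: G_def)
    have "log 2 (real (card (VL t g))) - log 2 (real (card (VL (Suc t) g)))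
        \<le> (\<Sum>g\<in>G. log 2 (real (card (VL t g))) - log 2 (real (card (VL (Suc t) g))))"
      using gG finGstar dL0g unfolding G_def by (intro member_le_sum) (auto simp: G_def)
    then show ?thesis using dLeq[of t] g1 by linarith
  qed
  have failM: "PM t - PM (Suc t) \<ge> 1 \<or> snd (lo_process mu_star inspL (ep t)) \<noteq> None"
    if tT: "t < T" and nF: "\<not> inspF (full_traj (ep t))" for t
  proof -
    have wf: "hi_wf H (ep t)" and fo: "follows (VM t) (VL t) (ep t)"
      using run[OF tT] by (auto simp: VM_def VL_def V_def)
    have "\<not> (\<forall>(s,g,\<tau>)\<in>set (ep t). g = mu_star s \<and> inspL \<tau> g)"
      using cons_FULL[OF wf] nF by blast
    show ?thesis
    proof (cases "\<forall>(s,g,\<tau>)\<in>set (ep t). g = mu_star s")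
      case True
      then have "\<exists>(s,g,\<tau>)\<in>set (ep t). \<not> inspL \<tau> g"
        using \<open>\<not> (\<forall>(s,g,\<tau>)\<in>set (ep t). g = mu_star s \<and> inspL \<tau> g)\<close> by fastforce
      then show ?thesis using lo_process_none[OF True] by blast
    next
      case False
      then obtain s g \<tau> where st: "(s,g,\<tau>) \<in> set (ep t)" "g \<noteq> mu_star s" by fastforce
      have mj: "is_maj (VM t) s g" using fo st(1) unfolding follows_def by fastforce
      have "2 * card (VM (Suc t)) \<le> card (VM t)"
        apply (rule halving[where hh=mu_star, OF finVM[of t] _ mj])
        using inv[of t] nF st by (auto simp: stepM)
      then have "PM (Suc t) + 1 \<le> PM t"
        unfolding PM_def using cardVM by (intro log_half) auto
      then show ?thesis by linarith
    qed
  qed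
  have round: "round_cost CIF CLH CII CLL mu_star inspF inspL (ep t)
      \<le> CIF + ((PM t - PM (Suc t)) + (PL t - PL (Suc t))) * A + (PL t - PL (Suc t)) * CLL"
    if tT: "t < T" for t
  proof -
    have d1: "0 \<le> PM t - PM (Suc t)" using dM0[of t] by simp
    have d2: "0 \<le> PL t - PL (Suc t)" using dL0[of t] by simp
    have p1: "0 \<le> ((PM t - PM (Suc t)) + (PL t - PL (Suc t))) * A" using d1 d2 A0 by simp
    have p2: "0 \<le> (PL t - PL (Suc t)) * CLL" using d2 costs by simp
    show ?thesis
    proof (cases "inspF (full_traj (ep t))")
      case True
      then show ?thesis using p1 p2 by (simp add: round_cost_def)
    next
      case nF: False
      have wf: "hi_wf H (ep t)" using run[OF tT] by auto
      have k: "real (fst (lo_process mu_star inspL (ep t))) \<le> real H"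
        using lo_process_len[of mu_star inspL "ep t"] wf unfolding hi_wf_def by simp
      have c1: "CLH + real (fst (lo_process mu_star inspL (ep t))) * CII \<le> A"
        unfolding A_def using k costs by (simp add: mult_right_mono)
      have f1: "((PM t - PM (Suc t)) + (PL t - PL (Suc t))) \<ge> 1"
        using failM[OF tT nF] someL[OF tT nF] d1 d2 by fastforce
      have c2: "A \<le> ((PM t - PM (Suc t)) + (PL t - PL (Suc t))) * A"
        using f1 A0 by (metis mult_1 mult_right_mono)
      have c3: "(if snd (lo_process mu_star inspL (ep t)) = None then 0 else CLL)
          \<le> (PL t - PL (Suc t)) * CLL"
      proof (cases "snd (lo_process mu_star inspL (ep t))")
        case None then show ?thesis using p2 by simp
      next
        case (Some a)
        obtain \<tau> g where "a = (\<tau>, g)" by (cases a) auto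
        then have "PL t - PL (Suc t) \<ge> 1" using someL[OF tT nF] Some by blast
        then show ?thesis using Some costs by (simp add: mult_right_mono[of 1 _ CLL, simplified])
      qed
      show ?thesis using nF c1 c2 c3 by (simp add: round_cost_def)
    qed
  qed
  have "(\<Sum>t<T. round_cost CIF CLH CII CLL mu_star inspF inspL (ep t))
      \<le> (\<Sum>t<T. CIF + ((PM t - PM (Suc t)) + (PL t - PL (Suc t))) * A + (PL t - PL (Suc t)) * CLL)"
    using round by (intro sum_mono) auto
  also have "\<dots> = real T * CIF + ((PM 0 - PM T) + (PL 0 - PL T)) * A + (PL 0 - PL T) * CLL"
  proof -
    have t1: "(\<Sum>t<T. PM t - PM (Suc t)) = PM 0 - PM T"
      using sum_lessThan_telescope'[of PM T] by simp
    have t2: "(\<Sum>t<T. PL t - PL (Suc t)) = PL 0 - PL T"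
      using sum_lessThan_telescope'[of PL T] by simp
    show ?thesis
      by (simp add: sum.distrib sum_distrib_right[symmetric] t1 t2)
  qed
  also have "\<dots> \<le> real T * CIF + (PM 0 + PL 0) * A + PL 0 * CLL"
    using PM_nn[of T] PL_nn[of T] A0 costs(4)
    by (simp add: algebra_simps mult_nonneg_nonneg add_nonneg_nonneg)
  also have "PM 0 = log 2 (card M)" by (simp add: PM_def VM_def V_def)
  also have "PL 0 = real (card (range mu_star)) * log 2 (card PiLO)"
    by (simp add: PL_def VL_def V_def G_def)
  finally show ?thesis by (simp add: A_def)
qed

end
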